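(* For every integer $n\ge2$, $\lambda(\mathbb{Z}/n\mathbb{Z})\le\frac1n\log\rho(n)$, where $\rho(n)$ is the smallest prime number that does not divide $n$.
   Context: For a compact abelian group $G$ with normalized Haar measure $\mu$ and (multiplicative) dual group of characters $\widehat{G}$, let $\mathbb{Z}[\widehat{G}]$ denote the ring of integral linear combinations of characters, regarded as functions on $G$. For $f\in\mathbb{Z}[\widehat{G}]$, the logarithmic Mahler measure over $G$ is $\mathsf{m}_G(f)=\int_G\log|f|\,d\mu$ (with $\log 0=-\infty$). The Lehmer constant of $G$ is $\lambda(G)=\inf\{\mathsf{m}_G(f): f\in\mathbb{Z}[\widehat{G}],\ \mathsf{m}_G(f)>0\}$. Here $\mathbb{Z}/n\mathbb{Z}$ is the finite cyclic group with the uniform probability measure; its characters are $\chi_k(j)=e^{2\pi i jk/n}$, $k=0,\dots,n-1$. *)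

theory Defs
  imports "HOL-Analysis.Analysis" "HOL-Computational_Algebra.Primes"
begin

definition zn_char :: "nat \<Rightarrow> nat \<Rightarrow> nat \<Rightarrow> complex" where
  "zn_char n k j = exp (2 * of_real pi * \<i> * of_nat j * of_nat k / of_nat n)"

text \<open>Element of Z[dual of Z/nZ] with integer coefficients c 0, ..., c (n-1),
  as a function on Z/nZ = {0..<n}.\<close>
definition zn_group_ring_fun :: "nat \<Rightarrow> (nat \<Rightarrow> int) \<Rightarrow> nat \<Rightarrow> complex" where
  "zn_group_ring_fun n c j = (\<Sum>k<n. of_int (c k) * zn_char n k j)"

definition mahler_Zn :: "nat \<Rightarrow> (nat \<Rightarrow> int) \<Rightarrow> ereal" where
  "mahler_Zn n c =
     (if \<exists>j<n. zn_group_ring_fun n c j = 0 then -\<infinity>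
      else ereal ((\<Sum>j<n. ln (cmod (zn_group_ring_fun n c j))) / real n))"

definition lehmer_Zn :: "nat \<Rightarrow> ereal" where
  "lehmer_Zn n = Inf {mahler_Zn n c | c. mahler_Zn n c > 0}"

definition rho :: "nat \<Rightarrow> nat" where
  "rho n = (LEAST p. prime p \<and> \<not> p dvd n)"

end

theory Submission
  imports Defs
begin

lemma zpow_mod:
  fixes z :: complex
  assumes "z ^ n = 1"
  shows "z ^ a = z ^ (a mod n)"
proof -
  have "z ^ a = z ^ (n * (a div n) + a mod n)" by simp
  also have "\<dots> = (z ^ n) ^ (a div n) * z ^ (a mod n)" by (simp only: power_add power_mult)
  finally show ?thesis using assms by simp
qed

lemma root_props:
  assumes n: "n \<ge> 1"
  defines "z \<equiv> exp (2 * of_real pi * \<i> / of_nat n)"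
  shows "z ^ n = 1" "\<And>k. 0 < k \<Longrightarrow> k < n \<Longrightarrow> z ^ k \<noteq> 1"
    "\<And>k j. zn_char n k j = z ^ (j * k)"
proof -
  have e: "z ^ m = exp (2 * of_real pi * \<i> * of_nat m / of_nat n)" for m
    unfolding z_def by (simp add: exp_of_nat_mult[symmetric] mult_ac)
  show "z ^ n = 1" using n by (simp add: e)
  show "\<And>k j. zn_char n k j = z ^ (j * k)" by (simp add: e zn_char_def mult_ac)
  fix k assume k: "0 < k" "k < n"
  show "z ^ k \<noteq> 1"
  proof
    assume "z ^ k = 1"
    then obtain m where m: "Im (2 * of_real pi * \<i> * of_nat k / of_nat n) = real_of_int (2 * m) * pi"
      by (auto simp: e exp_eq_1)
    have "Im (2 * of_real pi * \<i> * of_nat k / of_nat n) = 2 * pi * k / n"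
      by (simp add: Im_divide_of_nat)
    with m have "2 * pi * k / n = 2 * m * pi" by simp
    hence "real k = real n * m" using n pi_gt_zero by (simp add: field_simps)
    hence "int k = int n * m" by (metis of_int_eq_iff of_int_mult of_int_of_nat_eq)
    moreover have "m \<noteq> 0" using k calculation by auto
    ultimately have "\<bar>int k\<bar> \<ge> int n" by (simp add: abs_mult) (smt (verit) mult_le_cancel_left1 of_nat_0_le_iff)
    with k show False by simp
  qed
qed

theorem theorem4p6:
  fixes n :: nat
  assumes "n \<ge> 2"
  shows "lehmer_Zn n \<le> ereal (ln (real (rho n)) / real n)"
proof -
  define p where "p = rho n"
  have ex: "\<exists>q. prime q \<and> \<not> q dvd n"
  proof -
    obtain q where q: "prime q" "n < q" using bigger_prime by blast
    hence "\<not> q dvd n" using assms by (auto dest: dvd_imp_le)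
    with q show ?thesis by blast
  qed
  have pp: "prime p" "\<not> p dvd n" unfolding p_def rho_def using LeastI_ex[OF ex] by auto
  have cop: "coprime n p" using pp by (metis coprime_commute prime_imp_coprime)
  have n1: "n \<ge> 1" using assms by simp
  define z where "z = exp (2 * of_real pi * \<i> / of_nat n :: complex)"
  note zp = root_props[OF n1, folded z_def]
  define c where "c k = int (card {m \<in> {..<p}. m mod n = k})" for k
  define f where "f j = zn_group_ring_fun n c j" for j
  have f_eq: "f j = (\<Sum>m<p. (z ^ j) ^ m)" for j
  proof -
    have "f j = (\<Sum>k<n. of_nat (card {m \<in> {..<p}. m mod n = k}) * z ^ (j * k))"
      by (simp add: f_def zn_group_ring_fun_def c_def zp(3))
    also have "\<dots> = (\<Sum>k<n. \<Sum>m\<in>{m \<in> {..<p}. m mod n = k}. z ^ (j * m))"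
    proof (rule sum.cong[OF refl])
      fix k assume k: "k \<in> {..<n}"
      have "z ^ (j * m) = z ^ (j * k)" if "m \<in> {m \<in> {..<p}. m mod n = k}" for m
      proof -
        have "z ^ (j * m) = z ^ (j * m mod n)" by (rule zpow_mod[OF zp(1)])
        also have "j * m mod n = j * k mod n" using that mod_mult_right_eq[of j m n] by simp
        also have "z ^ (j * k mod n) = z ^ (j * k)" by (rule zpow_mod[OF zp(1), symmetric])
        finally show ?thesis .
      qed
      thus "of_nat (card {m \<in> {..<p}. m mod n = k}) * z ^ (j * k) =
            (\<Sum>m\<in>{m \<in> {..<p}. m mod n = k}. z ^ (j * m))" by simp
    qed
    also have "\<dots> = (\<Sum>m<p. z ^ (j * m))"
      by (rule sum.group) (use n1 in auto)
    finally show ?thesis by (simp add: power_mult)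
  qed
  have f0: "f 0 = of_nat p" by (simp add: f_eq)
  have fj: "f j = (1 - z ^ (j * p mod n)) / (1 - z ^ j)" if "0 < j" "j < n" for j
  proof -
    have "f j = (1 - (z ^ j) ^ p) / (1 - z ^ j)"
      using zp(2)[OF that] unfolding f_eq sum_gp_strict by simp
    also have "(z ^ j) ^ p = z ^ (j * p mod n)"
      by (simp only: power_mult[symmetric] zpow_mod[OF zp(1), of "j * p"])
    finally show ?thesis .
  qed
  have inj: "inj_on (\<lambda>j. j * p mod n) {1..<n}"
  proof (rule inj_onI)
    fix a b assume a: "a \<in> {1..<n}" and b: "b \<in> {1..<n}" and e: "a * p mod n = b * p mod n"
    show "a = b"
    proof (cases "a \<le> b")
      case True
      hence "a * p \<le> b * p" by simp
      hence "n dvd b * p - a * p" using e mod_eq_dvd_iff_nat by metis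
      hence "n dvd (b - a) * p" by (simp add: diff_mult_distrib)
      hence "n dvd b - a" using cop coprime_dvd_mult_left_iff by blast
      moreover have "b - a < n" using b by auto
      ultimately show ?thesis using True by (metis diff_is_0_eq dvd_imp_le le_antisym not_gr0 not_less)
    next
      case False
      hence "b \<le> a" by simp
      hence "b * p \<le> a * p" by simp
      hence "n dvd a * p - b * p" using e mod_eq_dvd_iff_nat by metis
      hence "n dvd (a - b) * p" by (simp add: diff_mult_distrib)
      hence "n dvd a - b" using cop coprime_dvd_mult_left_iff by blast
      moreover have "a - b < n" using a by auto
      ultimately show ?thesis using False by (metis diff_is_0_eq dvd_imp_le le_antisym not_gr0 not_less nat_le_linear)
    qed
  qed
  have into: "(\<lambda>j. j * p mod n) ` {1..<n} \<subseteq> {1..<n}"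
  proof
    fix x assume "x \<in> (\<lambda>j. j * p mod n) ` {1..<n}"
    then obtain j where j: "j \<in> {1..<n}" "x = j * p mod n" by auto
    have "\<not> n dvd j * p"
    proof
      assume "n dvd j * p"
      hence "n dvd j" using cop coprime_dvd_mult_left_iff by blast
      with j show False by (auto dest: dvd_imp_le)
    qed
    hence "x \<noteq> 0" using j by (simp add: dvd_eq_mod_eq_0)
    moreover have "x < n" using j n1 by simp
    ultimately show "x \<in> {1..<n}" by simp
  qed
  have img: "(\<lambda>j. j * p mod n) ` {1..<n} = {1..<n}" by (rule endo_inj_surj[OF _ into inj]) simp
  have pr1: "(\<Prod>j\<in>{1..<n}. f j) = 1"
  proof -
    have "(\<Prod>j\<in>{1..<n}. f j) = (\<Prod>j\<in>{1..<n}. (1 - z ^ (j * p mod n)) / (1 - z ^ j))"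
      by (rule prod.cong) (auto simp: fj)
    also have "\<dots> = (\<Prod>j\<in>{1..<n}. 1 - z ^ (j * p mod n)) / (\<Prod>j\<in>{1..<n}. 1 - z ^ j)"
      by (rule prod_dividef)
    also have "(\<Prod>j\<in>{1..<n}. 1 - z ^ (j * p mod n)) = (\<Prod>j\<in>{1..<n}. 1 - z ^ j)"
      using prod.reindex[OF inj, of "\<lambda>j. 1 - z ^ j"] img by (simp add: o_def)
    also have "(\<Prod>j\<in>{1..<n}. 1 - z ^ j) \<noteq> 0" using zp(2) by auto
    hence "(\<Prod>j\<in>{1..<n}. 1 - z ^ j) / (\<Prod>j\<in>{1..<n}. 1 - z ^ j) = 1" by simp
    finally show ?thesis .
  qed
  have split: "{..<n} = insert 0 {1..<n}" using n1 by auto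
  have prall: "(\<Prod>j<n. f j) = of_nat p" using pr1 by (simp add: split f0)
  have p2: "p \<ge> 2" using pp prime_ge_2_nat by blast
  have nz: "f j \<noteq> 0" if "j < n" for j
  proof
    assume "f j = 0"
    hence "(\<Prod>j<n. f j) = 0" using that by (auto intro: prod_zero)
    with prall p2 show False by simp
  qed
  have "(\<Sum>j<n. ln (cmod (f j))) = ln (\<Prod>j<n. cmod (f j))"
    by (rule ln_prod[symmetric]) (use nz in auto)
  also have "(\<Prod>j<n. cmod (f j)) = real p" by (simp only: prod_norm prall norm_of_nat)
  finally have sumeq: "(\<Sum>j<n. ln (cmod (f j))) = ln (real p)" .
  have mc: "mahler_Zn n c = ereal (ln (real p) / real n)"
    using nz sumeq by (auto simp: mahler_Zn_def f_def)
  have "ln (real p) / real n > 0" using p2 n1 by simp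
  hence "mahler_Zn n c > 0" using mc by simp
  hence "mahler_Zn n c \<in> {mahler_Zn n c | c. mahler_Zn n c > 0}" by blast
  hence "lehmer_Zn n \<le> mahler_Zn n c" unfolding lehmer_Zn_def by (rule Inf_lower)
  thus ?thesis using mc p_def by simp
qed

end
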